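(* Assume the linear payoff assumption. Let $X=\begin{bmatrix}A(\nu^* )\\ B(\mu^* )\end{bmatrix}\in\mathbb{R}^{(m+n-2)\times d}$ and $y=\begin{bmatrix}c(\mu^* )\\ d(\nu^* )\end{bmatrix}$. Assume $X$ has full row rank and its smallest singular value satisfies $\sigma_{m+n-2}(X)\ge\sigma_b>0$. Let $\theta^*_{\min}=X^\dagger y$ be the minimum-norm solution of $X\theta=y$, where ${}^\dagger$ is the Moore–Penrose pseudoinverse. Let $(a^k,b^k)$, $k\le N$, be i.i.d. with $a^k\sim\mu^*$ and $b^k\sim\nu^*$ independent, and let $\widehat\mu,\widehat\nu$ be the empirical frequencies. Set $$\widehat\theta=\begin{bmatrix}A(\widehat\nu)\\ B(\widehat\mu)\end{bmatrix}^\dagger\begin{bmatrix}c(\widehat\mu)\\ d(\widehat\nu)\end{bmatrix}.$$ Then for every $\delta\in(0,1)$ there are $N_0$ and $C$ (depending on $\phi,\eta,\sigma_b,\mu^*,\nu^*,\delta$ but not on $N$) such that for $N\ge N_0$, with probability at least $1-\delta$, $$\|\widehat\theta-\theta^*_{\min}\|\le C\,\frac{m^2+n^2}{\sqrt N}.$$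
   Context: Let $m,n\ge 2$, $\mathcal A=\{1,\dots,m\}$, $\mathcal B=\{1,\dots,n\}$, and $\eta>0$. For a payoff matrix $Q\in\mathbb{R}^{m\times n}$, the entropy-regularized zero-sum matrix game is $$\max_{\mu\in\Delta(\mathcal A)}\min_{\nu\in\Delta(\mathcal B)}\ \mu^\top Q\nu+\eta^{-1}\mathcal H(\mu)-\eta^{-1}\mathcal H(\nu),\qquad \mathcal H(\pi)=-\sum_i\pi_i\log\pi_i .$$ Its unique saddle point, the quantal response equilibrium (QRE) $(\mu,\nu)$, is characterized by $$\mu(a)=\frac{\exp\big(\eta\sum_b Q(a,b)\nu(b)\big)}{\sum_{a'}\exp\big(\eta\sum_bQ(a',b)\nu(b)\big)},\qquad \nu(b)=\frac{\exp\big(-\eta\sum_a Q(a,b)\mu(a)\big)}{\sum_{b'}\exp\big(-\eta\sum_aQ(a,b')\mu(a)\big)}.$$ Linear payoff assumption: there are a feature map $\phi:\mathcal A\times\mathcal B\to\mathbb{R}^d$ and $\theta^*\in\mathbb{R}^d$ with $\|\theta^*\|^2\le M$ such that $Q(a,b)=\langle\phi(a,b),\theta^*\rangle$ for all $(a,b)$. $(\mu^*,\nu^* )$ denotes the QRE of this $Q$; all its entries are positive. For $\mu\in\Delta(\mathcal A)$ and $\nu\in\Delta(\mathcal B)$ with positive entries, define: - $A(\nu)\in\mathbb{R}^{(m-1)\times d}$, whose row indexed by $a=2,\dots,m$ is $\sum_{b}\nu(b)\,(\phi(a,b)-\phi(1,b))^\top$; - $B(\mu)\in\mathbb{R}^{(n-1)\times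 d}$, whose row indexed by $b=2,\dots,n$ is $\sum_a\mu(a)\,(\phi(a,b)-\phi(a,1))^\top$; - $c(\mu)=\big(\eta^{-1}\log(\mu(a)/\mu(1))\big)_{a=2}^m\in\mathbb{R}^{m-1}$; - $d(\nu)=\big(-\eta^{-1}\log(\nu(b)/\nu(1))\big)_{b=2}^n\in\mathbb{R}^{n-1}$. *)

theory Defs
  imports "HOL-Probability.Probability" "Jordan_Normal_Form.Matrix" "Jordan_Normal_Form.Char_Poly"
    "Jordan_Normal_Form.DL_Rank"
begin

text \<open>Actions are natural numbers: player 1 actions {1..m}, player 2 actions {1..n};
  the reference action is 1. Distributions/frequencies are functions nat => real.\<close>

definition vnorm :: "real vec \<Rightarrow> real" where
  "vnorm v = sqrt (v \<bullet> v)"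

definition is_QRE :: "nat \<Rightarrow> nat \<Rightarrow> real \<Rightarrow> (nat \<Rightarrow> nat \<Rightarrow> real) \<Rightarrow> (nat \<Rightarrow> real) \<Rightarrow> (nat \<Rightarrow> real) \<Rightarrow> bool" where
  "is_QRE m n \<eta> Q \<mu> \<nu> \<longleftrightarrow>
     (\<forall>a\<in>{1..m}. \<mu> a = exp (\<eta> * (\<Sum>b\<in>{1..n}. Q a b * \<nu> b)) /
                        (\<Sum>a'\<in>{1..m}. exp (\<eta> * (\<Sum>b\<in>{1..n}. Q a' b * \<nu> b)))) \<and>
     (\<forall>b\<in>{1..n}. \<nu> b = exp (- \<eta> * (\<Sum>a\<in>{1..m}. Q a b * \<mu> a)) /
                        (\<Sum>b'\<in>{1..n}. exp (- \<eta> * (\<Sum>a\<in>{1..m}. Q a b' * \<mu> a))))"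

text \<open>A(nu): (m-1) x d; row index i (0-based) corresponds to action a = i+2.\<close>
definition A_mat :: "nat \<Rightarrow> nat \<Rightarrow> nat \<Rightarrow> (nat \<Rightarrow> nat \<Rightarrow> real vec) \<Rightarrow> (nat \<Rightarrow> real) \<Rightarrow> real mat" where
  "A_mat m n d \<phi> \<nu> = mat (m - 1) d (\<lambda>(i, j). \<Sum>b\<in>{1..n}. \<nu> b * (\<phi> (i + 2) b $ j - \<phi> 1 b $ j))"

text \<open>B(mu): (n-1) x d; row index i (0-based) corresponds to action b = i+2.\<close>
definition B_mat :: "nat \<Rightarrow> nat \<Rightarrow> nat \<Rightarrow> (nat \<Rightarrow> nat \<Rightarrow> real vec) \<Rightarrow> (nat \<Rightarrow> real) \<Rightarrow> real mat" where
  "B_mat m n d \<phi> \<mu> = mat (n - 1) d (\<lambda>(i, j). \<Sum>a\<in>{1..m}. \<mu> a * (\<phi> a (i + 2) $ j - \<phi> a 1 $ j))"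

definition c_vec :: "nat \<Rightarrow> real \<Rightarrow> (nat \<Rightarrow> real) \<Rightarrow> real vec" where
  "c_vec m \<eta> \<mu> = vec (m - 1) (\<lambda>i. ln (\<mu> (i + 2) / \<mu> 1) / \<eta>)"

definition d_vec :: "nat \<Rightarrow> real \<Rightarrow> (nat \<Rightarrow> real) \<Rightarrow> real vec" where
  "d_vec n \<eta> \<nu> = vec (n - 1) (\<lambda>i. - ln (\<nu> (i + 2) / \<nu> 1) / \<eta>)"

definition stack_mat :: "'a mat \<Rightarrow> 'a mat \<Rightarrow> 'a mat" where
  "stack_mat X Y = mat (dim_row X + dim_row Y) (dim_col X)
     (\<lambda>(i, j). if i < dim_row X then X $$ (i, j) else Y $$ (i - dim_row X, j))"

text \<open>Moore--Penrose pseudoinverse (real matrices: conjugate transpose = transpose),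
  the unique matrix satisfying the four Penrose conditions.\<close>
definition pinv :: "real mat \<Rightarrow> real mat" where
  "pinv X = (THE Y. Y \<in> carrier_mat (dim_col X) (dim_row X) \<and>
       X * Y * X = X \<and> Y * X * Y = Y \<and>
       transpose_mat (X * Y) = X * Y \<and> transpose_mat (Y * X) = Y * X)"

definition full_row_rank :: "real mat \<Rightarrow> bool" where
  "full_row_rank X \<longleftrightarrow> vec_space.rank (dim_row X) X = dim_row X"

text \<open>Smallest singular value of a matrix with at most as many rows as columns:
  square root of the smallest eigenvalue of X X^T (the singular values of X are the square
  roots of the eigenvalues of X X^T).\<close>
definition sigma_min :: "real mat \<Rightarrow> real" where
  "sigma_min X = sqrt (Min {k. eigenvalue (X * transpose_mat X) k})"

definition emp_fst :: "nat \<Rightarrow> (nat \<Rightarrow> nat \<times> nat) \<Rightarrow> nat \<Rightarrow> real" where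
  "emp_fst N s a = real (card {k\<in>{..<N}. fst (s k) = a}) / real N"

definition emp_snd :: "nat \<Rightarrow> (nat \<Rightarrow> nat \<times> nat) \<Rightarrow> nat \<Rightarrow> real" where
  "emp_snd N s b = real (card {k\<in>{..<N}. snd (s k) = b}) / real N"

end

theory Submission
  imports Defs
begin

definition n1 :: "real vec \<Rightarrow> real" where "n1 v = (\<Sum>i<dim_vec v. \<bar>v$i\<bar>)"
definition mn :: "real mat \<Rightarrow> real" where
  "mn A = (\<Sum>i<dim_row A. \<Sum>j<dim_col A. \<bar>A$$(i,j)\<bar>)"

lemma n1_nonneg: "n1 v \<ge> 0" unfolding n1_def by (intro sum_nonneg) auto
lemma mn_nonneg: "mn A \<ge> 0" unfolding mn_def by (intro sum_nonneg) auto

lemma abs_index_le_n1: "i < dim_vec v \<Longrightarrow> \<bar>v$i\<bar> \<le> n1 v"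
  unfolding n1_def by (rule member_le_sum) auto

lemma abs_entry_le_mn: assumes "i < dim_row A" "j < dim_col A" shows "\<bar>A$$(i,j)\<bar> \<le> mn A"
proof -
  have "\<bar>A$$(i,j)\<bar> \<le> (\<Sum>j<dim_col A. \<bar>A$$(i,j)\<bar>)" by (rule member_le_sum) (use assms in auto)
  also have "\<dots> \<le> mn A" unfolding mn_def
    by (rule member_le_sum[where f = "\<lambda>i. \<Sum>j<dim_col A. \<bar>A$$(i,j)\<bar>"]) (use assms in \<open>auto intro: sum_nonneg\<close>)
  finally show ?thesis .
qed

lemma n1_mult: assumes "dim_col A = dim_vec v" shows "n1 (A *\<^sub>v v) \<le> mn A * n1 v"
proof -
  have "n1 (A *\<^sub>v v) = (\<Sum>i<dim_row A. \<bar>\<Sum>j<dim_col A. A$$(i,j) * v$j\<bar>)"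
    unfolding n1_def using assms
    by (simp add: mult_mat_vec_def scalar_prod_def row_def atLeast0LessThan)
  also have "\<dots> \<le> (\<Sum>i<dim_row A. \<Sum>j<dim_col A. \<bar>A$$(i,j)\<bar> * n1 v)"
  proof (rule sum_mono)
    fix i assume "i \<in> {..<dim_row A}"
    have "\<bar>\<Sum>j<dim_col A. A$$(i,j) * v$j\<bar> \<le> (\<Sum>j<dim_col A. \<bar>A$$(i,j) * v$j\<bar>)" by (rule sum_abs)
    also have "\<dots> \<le> (\<Sum>j<dim_col A. \<bar>A$$(i,j)\<bar> * n1 v)"
      by (rule sum_mono) (use assms in \<open>auto simp: abs_mult intro: mult_left_mono abs_index_le_n1\<close>)
    finally show "\<bar>\<Sum>j<dim_col A. A$$(i,j) * v$j\<bar> \<le> (\<Sum>j<dim_col A. \<bar>A$$(i,j)\<bar> * n1 v)" .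
  qed
  also have "\<dots> = mn A * n1 v" unfolding mn_def by (simp add: sum_distrib_right)
  finally show ?thesis .
qed

lemma mn_mult: assumes "dim_col A = dim_row B" shows "mn (A * B) \<le> mn A * mn B"
proof -
  have "mn (A * B) = (\<Sum>i<dim_row A. \<Sum>k<dim_col B. \<bar>\<Sum>j<dim_col A. A$$(i,j) * B$$(j,k)\<bar>)"
    unfolding mn_def using assms
    by (simp add: times_mat_def scalar_prod_def row_def col_def atLeast0LessThan)
  also have "\<dots> \<le> (\<Sum>i<dim_row A. \<Sum>k<dim_col B. \<Sum>j<dim_col A. \<bar>A$$(i,j)\<bar> * \<bar>B$$(j,k)\<bar>)"
    by (intro sum_mono) (auto simp: abs_mult[symmetric] intro: sum_abs)
  also have "\<dots> = (\<Sum>i<dim_row A. \<Sum>j<dim_col A. \<bar>A$$(i,j)\<bar> * (\<Sum>k<dim_col B. \<bar>B$$(j,k)\<bar>))"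
    by (rule sum.cong[OF refl]) (simp add: sum_distrib_left, rule sum.swap)
  also have "\<dots> \<le> (\<Sum>i<dim_row A. \<Sum>j<dim_col A. \<bar>A$$(i,j)\<bar> * mn B)"
  proof (intro sum_mono mult_left_mono)
    fix j assume "j \<in> {..<dim_col A}"
    then show "(\<Sum>k<dim_col B. \<bar>B$$(j,k)\<bar>) \<le> mn B" unfolding mn_def using assms
      by (intro member_le_sum[where f = "\<lambda>j. \<Sum>k<dim_col B. \<bar>B$$(j,k)\<bar>"]) (auto intro: sum_nonneg)
  qed auto
  also have "\<dots> = mn A * mn B" unfolding mn_def by (simp add: sum_distrib_right)
  finally show ?thesis .
qed

lemma mn_transpose: "mn (transpose_mat A) = mn A"
  unfolding mn_def by simp (rule sum.swap)

lemma n1_add: assumes "dim_vec u = dim_vec v" shows "n1 (u + v) \<le> n1 u + n1 v"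
proof -
  have "n1 (u + v) = (\<Sum>i<dim_vec v. \<bar>u$i + v$i\<bar>)" unfolding n1_def using assms by (intro sum.cong) auto
  also have "\<dots> \<le> (\<Sum>i<dim_vec v. \<bar>u$i\<bar> + \<bar>v$i\<bar>)" by (rule sum_mono) (rule abs_triangle_ineq)
  also have "\<dots> = n1 u + n1 v" unfolding n1_def using assms by (simp add: sum.distrib)
  finally show ?thesis .
qed

lemma n1_diff: assumes "dim_vec u = dim_vec v" shows "n1 (u - v) \<le> n1 u + n1 v"
proof -
  have "n1 (u - v) = (\<Sum>i<dim_vec v. \<bar>u$i - v$i\<bar>)" unfolding n1_def using assms by (intro sum.cong) auto
  also have "\<dots> \<le> (\<Sum>i<dim_vec v. \<bar>u$i\<bar> + \<bar>v$i\<bar>)" by (rule sum_mono) (rule abs_triangle_ineq4)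
  also have "\<dots> = n1 u + n1 v" unfolding n1_def using assms by (simp add: sum.distrib)
  finally show ?thesis .
qed

lemma n1_uminus: "n1 (- u) = n1 u" unfolding n1_def by simp

lemma mn_add: assumes "dim_row A = dim_row B" "dim_col A = dim_col B" shows "mn (A + B) \<le> mn A + mn B"
proof -
  have "mn (A + B) = (\<Sum>i<dim_row B. \<Sum>j<dim_col B. \<bar>A$$(i,j) + B$$(i,j)\<bar>)" unfolding mn_def using assms
    by (intro sum.cong) auto
  also have "\<dots> \<le> (\<Sum>i<dim_row B. \<Sum>j<dim_col B. \<bar>A$$(i,j)\<bar> + \<bar>B$$(i,j)\<bar>)"
    by (intro sum_mono) (rule abs_triangle_ineq)
  also have "\<dots> = mn A + mn B" unfolding mn_def using assms by (simp add: sum.distrib)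
  finally show ?thesis .
qed

lemma mn_diff: assumes "dim_row A = dim_row B" "dim_col A = dim_col B" shows "mn (A - B) \<le> mn A + mn B"
proof -
  have "mn (A - B) = (\<Sum>i<dim_row B. \<Sum>j<dim_col B. \<bar>A$$(i,j) - B$$(i,j)\<bar>)" unfolding mn_def using assms
    by (intro sum.cong) auto
  also have "\<dots> \<le> (\<Sum>i<dim_row B. \<Sum>j<dim_col B. \<bar>A$$(i,j)\<bar> + \<bar>B$$(i,j)\<bar>)"
    by (intro sum_mono) (rule abs_triangle_ineq4)
  also have "\<dots> = mn A + mn B" unfolding mn_def using assms by (simp add: sum.distrib)
  finally show ?thesis .
qed

lemma n1_zero: assumes "n1 v \<le> 0" shows "v = 0\<^sub>v (dim_vec v)"
proof (rule eq_vecI)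
  fix i assume i: "i < dim_vec (0\<^sub>v (dim_vec v))"
  have "\<bar>v$i\<bar> \<le> 0" using abs_index_le_n1[of i v] i assms by simp
  then show "v $ i = 0\<^sub>v (dim_vec v) $ i" using i by simp
qed simp

lemma vnorm_le_n1: "vnorm v \<le> n1 v"
proof -
  have "v \<bullet> v = (\<Sum>i<dim_vec v. \<bar>v$i\<bar> * \<bar>v$i\<bar>)"
    by (simp add: scalar_prod_def atLeast0LessThan abs_mult[symmetric])
  also have "\<dots> \<le> (\<Sum>i<dim_vec v. \<bar>v$i\<bar> * n1 v)"
    by (intro sum_mono mult_left_mono abs_index_le_n1) auto
  also have "\<dots> = n1 v ^ 2" by (simp add: n1_def sum_distrib_right power2_eq_square)
  finally have "v \<bullet> v \<le> n1 v ^ 2" .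
  then have "sqrt (v \<bullet> v) \<le> sqrt (n1 v ^ 2)" using real_sqrt_le_mono by blast
  also have "sqrt (n1 v ^ 2) = n1 v" using n1_nonneg[of v] by (rule real_sqrt_unique[OF refl])
  finally show ?thesis unfolding vnorm_def .
qed

lemma transpose_W_sym:
  fixes P W :: "real mat"
  assumes P: "P \<in> carrier_mat r r" and W: "W \<in> carrier_mat r r"
    and Ps: "transpose_mat P = P" and WP: "W * P = 1\<^sub>m r" and PW: "P * W = 1\<^sub>m r"
  shows "transpose_mat W = W"
proof -
  have "transpose_mat W * P = transpose_mat (P * W)"
    using transpose_mult[OF P W] Ps by simp
  also have "\<dots> = 1\<^sub>m r" using PW by simp
  finally have 1: "transpose_mat W * P = 1\<^sub>m r" .
  have "transpose_mat W = transpose_mat W * (P * W)" using PW W by simp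
  also have "\<dots> = (transpose_mat W * P) * W" using P W by simp
  also have "\<dots> = W" using 1 W by simp
  finally show ?thesis .
qed

lemma pinv_eq:
  fixes X W :: "real mat"
  assumes X: "X \<in> carrier_mat r d" and W: "W \<in> carrier_mat r r"
    and WP: "W * (X * transpose_mat X) = 1\<^sub>m r" and PW: "(X * transpose_mat X) * W = 1\<^sub>m r"
  shows "pinv X = transpose_mat X * W"
proof -
  let ?P = "X * transpose_mat X"
  let ?Y = "transpose_mat X * W"
  have XT: "transpose_mat X \<in> carrier_mat d r" using X by simp
  have P: "?P \<in> carrier_mat r r" using X by simp
  have Y: "?Y \<in> carrier_mat d r" using X W by simp
  have Ps: "transpose_mat ?P = ?P" using transpose_mult[OF X XT] by simp
  have Ws: "transpose_mat W = W" by (rule transpose_W_sym[OF P W Ps WP PW])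
  have XY: "X * ?Y = 1\<^sub>m r"
  proof -
    have "X * ?Y = ?P * W" using X XT W by simp
    then show ?thesis using PW by simp
  qed
  have c1: "X * ?Y * X = X" using XY X by simp
  have c2: "?Y * X * ?Y = ?Y"
  proof -
    have "?Y * X * ?Y = ?Y * (X * ?Y)" using Y X by simp
    then show ?thesis using XY right_mult_one_mat[OF Y] by simp
  qed
  have c3: "transpose_mat (X * ?Y) = X * ?Y" using XY by simp
  have c4: "transpose_mat (?Y * X) = ?Y * X"
  proof -
    have "transpose_mat (?Y * X) = transpose_mat X * transpose_mat ?Y"
      using transpose_mult[OF Y X] by simp
    also have "transpose_mat ?Y = transpose_mat W * X"
      using transpose_mult[OF XT W] by simp
    finally show ?thesis using Ws X XT W by simp
  qed
  have uniq: "Y' = ?Y" if Y': "Y' \<in> carrier_mat d r" and h1: "X * Y' * X = X"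
    and h4: "transpose_mat (Y' * X) = Y' * X" for Y'
  proof -
    have YX: "Y' * X \<in> carrier_mat d d" using Y' X by simp
    have "Y' = Y' * (?P * W)" using PW Y' by simp
    also have "\<dots> = ((Y' * X) * transpose_mat X) * W"
      using assoc_mult_mat[OF Y' P W] assoc_mult_mat[OF Y' X XT] by simp
    also have "(Y' * X) * transpose_mat X = transpose_mat (Y' * X) * transpose_mat X" using h4 by simp
    also have "\<dots> = transpose_mat (X * (Y' * X))" using transpose_mult[OF X YX] by simp
    also have "X * (Y' * X) = X" using h1 X Y' by simp
    finally show ?thesis .
  qed
  show ?thesis unfolding pinv_def
    apply (rule the_equality)
    using Y c1 c2 c3 c4 X apply simp
    using uniq X by auto
qed

lemma self_scalar_zero:
  fixes u :: "real vec"
  assumes "u \<bullet> u = 0" shows "u = 0\<^sub>v (dim_vec u)"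
proof (rule eq_vecI)
  fix i assume i: "i < dim_vec (0\<^sub>v (dim_vec u))"
  have "(\<Sum>j\<in>{0..<dim_vec u}. u$j * u$j) = 0" using assms by (simp add: scalar_prod_def)
  then have "\<forall>j\<in>{0..<dim_vec u}. u$j * u$j = 0"
    by (subst sum_nonneg_eq_0_iff[symmetric]) auto
  then show "u $ i = 0\<^sub>v (dim_vec u) $ i" using i by auto
qed simp

lemma full_row_rank_kernel:
  fixes X :: "real mat"
  assumes X: "X \<in> carrier_mat r d" and rk: "vec_space.rank r X = r"
    and w: "w \<in> carrier_vec r" and k: "transpose_mat X *\<^sub>v w = 0\<^sub>v d"
  shows "w = 0\<^sub>v r"
proof -
  interpret vec_space "TYPE(real)" r .
  obtain S where S: "maximal S (\<lambda>T. T \<subseteq> set (cols X) \<and> lin_indpt T)"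
    using maximal_exists[of "(\<lambda>T. T \<subseteq> set (cols X) \<and> lin_indpt T)" "card (set (cols X))" "{}"]
    by (meson List.finite_set card_mono empty_iff empty_subsetI finite_lin_indpt2 rev_finite_subset)
  have cS: "card S = r" using rank_card_indpt[OF X S] rk by simp
  have SX: "S \<subseteq> set (cols X)" and li: "lin_indpt S" using S by (auto simp: maximal_def)
  have colsC: "set (cols X) \<subseteq> carrier_vec r" using X cols_dim by blast
  have SC: "S \<subseteq> carrier_vec r" using SX colsC by blast
  have fS: "finite S" using SX finite_subset by blast
  have "basis S" by (rule dim_li_is_basis) (use fS SC li cS dim_is_n in auto)
  then have "span S = carrier_vec r" by (simp add: basis_def)
  with w have "w \<in> span S" by simp
  then obtain a A where A: "A \<subseteq> S" "finite A" and wl: "w = lincomb a A"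
    unfolding span_def by blast
  have AC: "A \<subseteq> carrier_vec r" using A SC by blast
  have orth: "w \<bullet> x = 0" if "x \<in> A" for x
  proof -
    from that A SX obtain j where j: "j < dim_col X" "x = col X j"
      by (auto simp: cols_def)
    have "(transpose_mat X *\<^sub>v w) $ j = 0" using k j X by simp
    then have "col X j \<bullet> w = 0" using j by simp
    then show ?thesis using j comm_scalar_prod[of w r "col X j"] w X by auto
  qed
  have "w \<bullet> w = (\<Sum>i<r. w$i * (\<Sum>x\<in>A. a x * x$i))"
    using w by (subst (2) wl) (simp add: scalar_prod_def lincomb_index[OF _ AC] atLeast0LessThan lincomb_dim[OF A(2) AC])
  also have "\<dots> = (\<Sum>x\<in>A. a x * (\<Sum>i<r. w$i * x$i))"
    by (simp add: sum_distrib_left sum_distrib_right mult_ac) (rule sum.swap)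
  also have "\<dots> = (\<Sum>x\<in>A. a x * (w \<bullet> x))"
    using AC by (intro sum.cong refl) (auto simp: scalar_prod_def atLeast0LessThan)
  also have "\<dots> = 0" using orth by simp
  finally have "w \<bullet> w = 0" .
  from self_scalar_zero[OF this] show ?thesis using w by simp
qed

lemma full_row_rank_det:
  fixes X :: "real mat"
  assumes X: "X \<in> carrier_mat r d" and rk: "vec_space.rank r X = r"
  shows "det (X * transpose_mat X) \<noteq> 0"
proof
  assume "det (X * transpose_mat X) = 0"
  then obtain v where v: "v \<in> carrier_vec r" "v \<noteq> 0\<^sub>v r" "(X * transpose_mat X) *\<^sub>v v = 0\<^sub>v r"
    using det_0_iff_vec_prod_zero[of "X * transpose_mat X" r] X by auto
  have XT: "transpose_mat X \<in> carrier_mat d r" using X by simp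
  have u: "transpose_mat X *\<^sub>v v \<in> carrier_vec d" using XT v by simp
  have "(transpose_mat X *\<^sub>v v) \<bullet> (transpose_mat X *\<^sub>v v) = v \<bullet> (X *\<^sub>v (transpose_mat X *\<^sub>v v))"
    by (rule transpose_vec_mult_scalar[OF X u v(1)])
  also have "X *\<^sub>v (transpose_mat X *\<^sub>v v) = 0\<^sub>v r" using v X XT by (simp flip: assoc_mult_mat_vec)
  also have "v \<bullet> 0\<^sub>v r = 0" using v by simp
  finally have "transpose_mat X *\<^sub>v v = 0\<^sub>v d" using self_scalar_zero[of "transpose_mat X *\<^sub>v v"] u X by auto
  then have "v = 0\<^sub>v r" using full_row_rank_kernel[OF X rk v(1)] by simp
  with v show False by simp
qed

lemma det_inverse:
  fixes P :: "real mat"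
  assumes P: "P \<in> carrier_mat r r" and d: "det P \<noteq> 0"
  obtains W where "W \<in> carrier_mat r r" "W * P = 1\<^sub>m r" "P * W = 1\<^sub>m r"
proof -
  have "P \<in> Units (ring_mat TYPE(real) r undefined)" by (rule det_non_zero_imp_unit[OF P d])
  then obtain W where "W \<in> carrier_mat r r" "W * P = 1\<^sub>m r" "P * W = 1\<^sub>m r"
    by (auto simp: Units_def ring_mat_def)
  then show ?thesis using that by blast
qed

lemma mn_minus_commute:
  assumes "dim_row A = dim_row B" "dim_col A = dim_col B" shows "mn (A - B) = mn (B - A)"
  unfolding mn_def using assms by (intro sum.cong refl) (auto simp: abs_minus_commute)

lemma mn_le_diff:
  assumes "dim_row A = dim_row B" "dim_col A = dim_col B" shows "mn A \<le> mn B + mn (A - B)"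
proof -
  have "mn A = (\<Sum>i<dim_row B. \<Sum>j<dim_col B. \<bar>A$$(i,j)\<bar>)" unfolding mn_def using assms by simp
  also have "\<dots> \<le> (\<Sum>i<dim_row B. \<Sum>j<dim_col B. \<bar>B$$(i,j)\<bar> + \<bar>A$$(i,j) - B$$(i,j)\<bar>)"
    by (intro sum_mono) linarith
  also have "\<dots> = mn B + mn (A - B)" unfolding mn_def using assms by (simp add: sum.distrib)
  finally show ?thesis .
qed

lemma n1_le_diff:
  assumes "dim_vec u = dim_vec v" shows "n1 u \<le> n1 v + n1 (u - v)"
proof -
  have "n1 u = (\<Sum>i<dim_vec v. \<bar>u$i\<bar>)" unfolding n1_def using assms by simp
  also have "\<dots> \<le> (\<Sum>i<dim_vec v. \<bar>v$i\<bar> + \<bar>u$i - v$i\<bar>)"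
    by (intro sum_mono) linarith
  also have "\<dots> = n1 v + n1 (u - v)" unfolding n1_def using assms by (simp add: sum.distrib)
  finally show ?thesis .
qed

lemma transpose_minus: "dim_row A = dim_row B \<Longrightarrow> dim_col A = dim_col B \<Longrightarrow>
  transpose_mat A - transpose_mat B = transpose_mat (A - B)"
  by (intro eq_matI) auto

lemma perturb:
  fixes X0 :: "real mat" and y0 :: "real vec"
  assumes X0: "X0 \<in> carrier_mat r d" and rk: "vec_space.rank r X0 = r" and y0: "y0 \<in> carrier_vec r"
  shows "\<exists>e0>0. \<exists>L. \<forall>X y. X \<in> carrier_mat r d \<longrightarrow> y \<in> carrier_vec r \<longrightarrow> mn (X - X0) \<le> e0 \<longrightarrow>
           n1 (pinv X *\<^sub>v y - pinv X0 *\<^sub>v y0) \<le> L * (mn (X - X0) + n1 (y - y0))"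
proof -
  define P0 where "P0 = X0 * transpose_mat X0"
  have X0T: "transpose_mat X0 \<in> carrier_mat d r" using X0 by simp
  have P0: "P0 \<in> carrier_mat r r" unfolding P0_def using X0 by simp
  have "det P0 \<noteq> 0" unfolding P0_def by (rule full_row_rank_det[OF X0 rk])
  then obtain W0 where W0: "W0 \<in> carrier_mat r r" "W0 * P0 = 1\<^sub>m r" "P0 * W0 = 1\<^sub>m r"
    using det_inverse[OF P0] by blast
  have pinv0: "pinv X0 = transpose_mat X0 * W0"
    by (rule pinv_eq[OF X0 W0(1)]) (use W0 in \<open>auto simp: P0_def\<close>)
  define K where "K = mn W0"
  define MX where "MX = mn X0"
  define c1 where "c1 = 2 * MX + 1"
  define w0 where "w0 = W0 *\<^sub>v y0"
  define e0 where "e0 = min 1 (1 / (2 * (K * c1) + 1))"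
  define L where "L = n1 w0 + (1 + MX) * (2 * K * c1 * n1 w0 + 2 * K)"
  have K0: "K \<ge> 0" unfolding K_def by (rule mn_nonneg)
  have MX0: "MX \<ge> 0" unfolding MX_def by (rule mn_nonneg)
  have c10: "c1 \<ge> 1" unfolding c1_def using MX0 by simp
  have Kc: "K * c1 \<ge> 0" using K0 c10 by simp
  have e0pos: "e0 > 0" unfolding e0_def using Kc by simp
  have w0C: "w0 \<in> carrier_vec r" unfolding w0_def using W0 y0 by simp
  have th0: "pinv X0 *\<^sub>v y0 = transpose_mat X0 *\<^sub>v w0"
    unfolding pinv0 w0_def using X0T W0 y0 by simp
  have main: "n1 (pinv X *\<^sub>v y - pinv X0 *\<^sub>v y0) \<le> L * (mn (X - X0) + n1 (y - y0))"
    if X: "X \<in> carrier_mat r d" and y: "y \<in> carrier_vec r" and ee: "mn (X - X0) \<le> e0" for X y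
  proof -
    define e where "e = mn (X - X0)"
    define f where "f = n1 (y - y0)"
    have e_0: "e \<ge> 0" unfolding e_def by (rule mn_nonneg)
    have f_0: "f \<ge> 0" unfolding f_def by (rule n1_nonneg)
    have e1: "e \<le> 1" using ee e0_def e_def by simp
    have eK: "K * c1 * e \<le> 1/2"
    proof -
      have "e \<le> 1 / (2 * (K * c1) + 1)" using ee e0_def e_def by simp
      then have "K * c1 * e \<le> K * c1 * (1 / (2 * (K * c1) + 1))" using Kc by (rule mult_left_mono)
      also have "\<dots> \<le> 1/2" using Kc by (simp add: field_simps)
      finally show ?thesis .
    qed
    define P where "P = X * transpose_mat X"
    have XT: "transpose_mat X \<in> carrier_mat d r" using X by simp
    have PC: "P \<in> carrier_mat r r" unfolding P_def using X by simp
    have mnX: "mn X \<le> MX + e" unfolding MX_def e_def using mn_le_diff[of X X0] X X0 by simp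
    have mnXT: "mn (transpose_mat X0 - transpose_mat X) = e"
      unfolding e_def using X X0 by (simp add: transpose_minus mn_transpose mn_minus_commute)
    have D: "P0 - P = (X0 - X) * transpose_mat X + X0 * (transpose_mat X0 - transpose_mat X)"
    proof -
      have "(X0 - X) * transpose_mat X = X0 * transpose_mat X - P"
        unfolding P_def by (rule minus_mult_distrib_mat[OF X0 X XT])
      moreover have "X0 * (transpose_mat X0 - transpose_mat X) = P0 - X0 * transpose_mat X"
        unfolding P0_def by (rule mult_minus_distrib_mat[OF X0 X0T XT])
      ultimately show ?thesis using P0 PC X0 XT by (intro eq_matI) auto
    qed
    have mnD: "mn (P0 - P) \<le> c1 * e"
    proof -
      have "mn (P0 - P) \<le> mn ((X0 - X) * transpose_mat X) + mn (X0 * (transpose_mat X0 - transpose_mat X))"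
        unfolding D by (rule mn_add) (use X X0 in auto)
      also have "\<dots> \<le> mn (X0 - X) * mn (transpose_mat X) + mn X0 * mn (transpose_mat X0 - transpose_mat X)"
        by (intro add_mono mn_mult) (use X X0 in auto)
      also have "mn (X0 - X) = e" unfolding e_def using X X0 by (simp add: mn_minus_commute)
      also have "mn (transpose_mat X) = mn X" by (rule mn_transpose)
      finally have "mn (P0 - P) \<le> e * mn X + MX * e" unfolding mnXT MX_def .
      also have "\<dots> \<le> e * (MX + e) + MX * e" using mnX e_0 by (simp add: mult_left_mono)
      also have "\<dots> \<le> c1 * e" unfolding c1_def using e1 e_0 MX0 by (simp add: algebra_simps power2_eq_square mult_left_le)
      finally show ?thesis .
    qed
    have DC: "P0 - P \<in> carrier_mat r r" using PC by (rule minus_carrier_mat)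
    have bk: "v = W0 *\<^sub>v (P0 *\<^sub>v v)" if v: "v \<in> carrier_vec r" for v
    proof -
      have "W0 *\<^sub>v (P0 *\<^sub>v v) = (W0 * P0) *\<^sub>v v" by (rule assoc_mult_mat_vec[OF W0(1) P0 v, symmetric])
      then show ?thesis using W0 v by simp
    qed
    have nW: "n1 (W0 *\<^sub>v u) \<le> K * n1 u" if "u \<in> carrier_vec r" for u
      unfolding K_def by (rule n1_mult) (use W0 that in auto)
    have nD: "n1 ((P0 - P) *\<^sub>v u) \<le> c1 * e * n1 u" if "u \<in> carrier_vec r" for u
    proof -
      have "n1 ((P0 - P) *\<^sub>v u) \<le> mn (P0 - P) * n1 u" by (rule n1_mult) (use DC that in auto)
      also have "\<dots> \<le> c1 * e * n1 u" using mnD n1_nonneg[of u] by (rule mult_right_mono)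
      finally show ?thesis .
    qed
    have inj: "v = 0\<^sub>v r" if v: "v \<in> carrier_vec r" and Pv: "P *\<^sub>v v = 0\<^sub>v r" for v
    proof -
      have "P0 *\<^sub>v v = (P0 - P) *\<^sub>v v"
        using minus_mult_distrib_mat_vec[OF P0 PC v] Pv v P0 by simp
      then have "n1 v = n1 (W0 *\<^sub>v ((P0 - P) *\<^sub>v v))" using bk[OF v] by simp
      also have "\<dots> \<le> K * n1 ((P0 - P) *\<^sub>v v)" by (rule nW) (use DC v in simp)
      also have "\<dots> \<le> K * (c1 * e * n1 v)" using nD[OF v] K0 by (rule mult_left_mono)
      also have "\<dots> \<le> 1/2 * n1 v" using mult_right_mono[OF eK n1_nonneg[of v]] by (simp add: mult.assoc)
      finally have "n1 v \<le> 0" using n1_nonneg[of v] by simp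
      from n1_zero[OF this] show ?thesis using v by simp
    qed
    have "det P \<noteq> 0"
    proof
      assume "det P = 0"
      then obtain v where "v \<in> carrier_vec r" "v \<noteq> 0\<^sub>v r" "P *\<^sub>v v = 0\<^sub>v r"
        using det_0_iff_vec_prod_zero[OF PC] by auto
      with inj show False by blast
    qed
    then obtain W where W: "W \<in> carrier_mat r r" "W * P = 1\<^sub>m r" "P * W = 1\<^sub>m r"
      using det_inverse[OF PC] by blast
    have pinvX: "pinv X = transpose_mat X * W"
      by (rule pinv_eq[OF X W(1)]) (use W in \<open>auto simp: P_def\<close>)
    define w where "w = W *\<^sub>v y"
    have wC: "w \<in> carrier_vec r" unfolding w_def using W y by simp
    have Pw: "P *\<^sub>v w = y" unfolding w_def using W PC y by (simp flip: assoc_mult_mat_vec)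
    have P0w0: "P0 *\<^sub>v w0 = y0" unfolding w0_def using W0 P0 y0 by (simp flip: assoc_mult_mat_vec)
    have th: "pinv X *\<^sub>v y = transpose_mat X *\<^sub>v w" unfolding pinvX w_def using XT W y by simp
    have dw: "w - w0 = W0 *\<^sub>v ((P0 - P) *\<^sub>v w + (y - y0))"
    proof -
      have "(P0 - P) *\<^sub>v w = P0 *\<^sub>v w - y" using minus_mult_distrib_mat_vec[OF P0 PC wC] Pw by simp
      moreover have "P0 *\<^sub>v (w - w0) = P0 *\<^sub>v w - y0" using mult_minus_distrib_mat_vec[OF P0 wC w0C] P0w0 by simp
      ultimately have "(P0 - P) *\<^sub>v w + (y - y0) = P0 *\<^sub>v (w - w0)"
        using P0 wC y y0 by (intro eq_vecI) auto
      then show ?thesis using bk[of "w - w0"] wC w0C by simp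
    qed
    have nw: "n1 (w - w0) \<le> K * (c1 * e * n1 w + f)"
    proof -
      have "n1 (w - w0) \<le> K * n1 ((P0 - P) *\<^sub>v w + (y - y0))" unfolding dw
        by (rule nW) (use DC PC wC y y0 in simp)
      also have "n1 ((P0 - P) *\<^sub>v w + (y - y0)) \<le> n1 ((P0 - P) *\<^sub>v w) + n1 (y - y0)"
        by (rule n1_add) (use DC PC wC y y0 in simp)
      also have "\<dots> \<le> c1 * e * n1 w + f" unfolding f_def using nD[OF wC] by simp
      finally show ?thesis using K0 by (simp add: mult_left_mono)
    qed
    have nw1: "n1 w \<le> n1 w0 + n1 (w - w0)" by (rule n1_le_diff) (use wC w0C in simp)
    have nw2: "n1 (w - w0) \<le> 2 * K * c1 * e * n1 w0 + 2 * K * f"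
    proof -
      have "n1 (w - w0) \<le> K * c1 * e * n1 w + K * f" using nw by (simp add: algebra_simps)
      also have "\<dots> \<le> K * c1 * e * (n1 w0 + n1 (w - w0)) + K * f"
        using nw1 Kc e_0 by (simp add: mult_left_mono)
      finally have "n1 (w - w0) \<le> K * c1 * e * n1 w0 + (K * c1 * e) * n1 (w - w0) + K * f"
        by (simp add: algebra_simps)
      moreover have "(K * c1 * e) * n1 (w - w0) \<le> 1/2 * n1 (w - w0)"
        using eK n1_nonneg by (rule mult_right_mono)
      ultimately show ?thesis by simp
    qed
    have dth: "transpose_mat X *\<^sub>v w - transpose_mat X0 *\<^sub>v w0
        = - ((transpose_mat X0 - transpose_mat X) *\<^sub>v w) + transpose_mat X0 *\<^sub>v (w - w0)"
    proof -
      have "(transpose_mat X0 - transpose_mat X) *\<^sub>v w = transpose_mat X0 *\<^sub>v w - transpose_mat X *\<^sub>v w"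
        by (rule minus_mult_distrib_mat_vec[OF X0T XT wC])
      moreover have "transpose_mat X0 *\<^sub>v (w - w0) = transpose_mat X0 *\<^sub>v w - transpose_mat X0 *\<^sub>v w0"
        by (rule mult_minus_distrib_mat_vec[OF X0T wC w0C])
      ultimately show ?thesis using X0T XT wC w0C by (intro eq_vecI) auto
    qed
    have "n1 (pinv X *\<^sub>v y - pinv X0 *\<^sub>v y0)
        \<le> n1 ((transpose_mat X0 - transpose_mat X) *\<^sub>v w) + n1 (transpose_mat X0 *\<^sub>v (w - w0))"
      unfolding th th0 dth using n1_add[of "- ((transpose_mat X0 - transpose_mat X) *\<^sub>v w)"
          "transpose_mat X0 *\<^sub>v (w - w0)"] n1_uminus X0T XT wC w0C by simp
    also have "\<dots> \<le> e * n1 w + MX * n1 (w - w0)"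
    proof (rule add_mono)
      show "n1 ((transpose_mat X0 - transpose_mat X) *\<^sub>v w) \<le> e * n1 w"
        using n1_mult[of "transpose_mat X0 - transpose_mat X" w] mnXT X0T XT wC by simp
      show "n1 (transpose_mat X0 *\<^sub>v (w - w0)) \<le> MX * n1 (w - w0)"
        using n1_mult[of "transpose_mat X0" "w - w0"] mn_transpose[of X0] X0T wC w0C
        unfolding MX_def by simp
    qed
    also have "\<dots> \<le> e * n1 w0 + (1 + MX) * n1 (w - w0)"
    proof -
      have "e * n1 w \<le> e * n1 w0 + e * n1 (w - w0)" using nw1 e_0
        by (metis distrib_left mult_left_mono)
      also have "e * n1 (w - w0) \<le> 1 * n1 (w - w0)" using e1 n1_nonneg by (rule mult_right_mono)
      finally show ?thesis by (simp add: algebra_simps)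
    qed
    also have "\<dots> \<le> e * n1 w0 + (1 + MX) * (2 * K * c1 * e * n1 w0 + 2 * K * f)"
      using nw2 MX0 by (simp add: mult_left_mono)
    also have "\<dots> \<le> L * (e + f)"
    proof -
      have "e * n1 w0 + (1 + MX) * (2 * K * c1 * e * n1 w0 + 2 * K * f)
          = e * (n1 w0 + (1 + MX) * (2 * K * c1 * n1 w0)) + f * ((1 + MX) * (2 * K))"
        by (simp add: algebra_simps)
      also have "\<dots> \<le> e * L + f * L" unfolding L_def
        using e_0 f_0 MX0 K0 c10 n1_nonneg[of w0]
        by (intro add_mono mult_left_mono) (auto simp: algebra_simps)
      finally show ?thesis by (simp add: algebra_simps)
    qed
    finally show ?thesis unfolding e_def f_def .
  qed
  show ?thesis using e0pos main by blast
qed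

lemma mn_entry_bound:
  assumes "A \<in> carrier_mat R C" "\<And>i j. i < R \<Longrightarrow> j < C \<Longrightarrow> \<bar>A$$(i,j)\<bar> \<le> c"
  shows "mn A \<le> real R * real C * c"
proof -
  have d: "dim_row A = R" "dim_col A = C" using assms(1) by auto
  have "mn A \<le> (\<Sum>i<R. \<Sum>j<C. c)" unfolding mn_def d using assms(2) by (intro sum_mono) auto
  then show ?thesis by simp
qed

lemma n1_entry_bound:
  fixes v :: "real vec" and c :: real
  assumes "v \<in> carrier_vec R" "\<And>i. i < R \<Longrightarrow> \<bar>v$i\<bar> \<le> c"
  shows "n1 v \<le> real R * c"
proof -
  have d: "dim_vec v = R" using assms(1) by auto
  have "n1 v \<le> (\<Sum>i<R. c)" unfolding n1_def d using assms(2) by (intro sum_mono) auto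
  then show ?thesis by simp
qed

lemma sum_dev_bound:
  fixes \<nu> \<nu>' D :: "nat \<Rightarrow> real"
  assumes "\<And>b. b \<in> S \<Longrightarrow> \<bar>\<nu> b - \<nu>' b\<bar> \<le> t" "\<And>b. b \<in> S \<Longrightarrow> \<bar>D b\<bar> \<le> c" "t \<ge> 0"
  shows "\<bar>(\<Sum>b\<in>S. \<nu> b * D b) - (\<Sum>b\<in>S. \<nu>' b * D b)\<bar> \<le> real (card S) * (t * c)"
proof -
  have "\<bar>(\<Sum>b\<in>S. \<nu> b * D b) - (\<Sum>b\<in>S. \<nu>' b * D b)\<bar> = \<bar>\<Sum>b\<in>S. (\<nu> b - \<nu>' b) * D b\<bar>"
    by (simp add: sum_subtractf left_diff_distrib)
  also have "\<dots> \<le> (\<Sum>b\<in>S. \<bar>(\<nu> b - \<nu>' b) * D b\<bar>)" by (rule sum_abs)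
  also have "\<dots> \<le> (\<Sum>b\<in>S. t * c)"
    by (intro sum_mono) (use assms in \<open>auto simp: abs_mult intro: mult_mono\<close>)
  finally show ?thesis by simp
qed

definition Fphi :: "nat \<Rightarrow> nat \<Rightarrow> nat \<Rightarrow> (nat \<Rightarrow> nat \<Rightarrow> real vec) \<Rightarrow> real" where
  "Fphi m n d \<phi> = (\<Sum>a\<in>{1..m}. \<Sum>b\<in>{1..n}. \<Sum>j<d. \<bar>\<phi> a b $ j\<bar>)"

lemma Fphi_bound:
  assumes "a \<in> {1..m}" "b \<in> {1..n}" "j < d"
  shows "\<bar>\<phi> a b $ j\<bar> \<le> Fphi m n d \<phi>"
proof -
  have "\<bar>\<phi> a b $ j\<bar> \<le> (\<Sum>j<d. \<bar>\<phi> a b $ j\<bar>)" by (rule member_le_sum) (use assms in auto)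
  also have "\<dots> \<le> (\<Sum>b\<in>{1..n}. \<Sum>j<d. \<bar>\<phi> a b $ j\<bar>)"
    by (rule member_le_sum[where f = "\<lambda>b. \<Sum>j<d. \<bar>\<phi> a b $ j\<bar>"]) (use assms in \<open>auto intro: sum_nonneg\<close>)
  also have "\<dots> \<le> Fphi m n d \<phi>" unfolding Fphi_def
    by (rule member_le_sum[where f = "\<lambda>a. \<Sum>b\<in>{1..n}. \<Sum>j<d. \<bar>\<phi> a b $ j\<bar>"]) (use assms in \<open>auto intro: sum_nonneg\<close>)
  finally show ?thesis .
qed

lemma stack_carrier:
  "stack_mat (A_mat m n d \<phi> \<nu>) (B_mat m n d \<phi> \<mu>) \<in> carrier_mat ((m - 1) + (n - 1)) d"
  by (simp add: stack_mat_def A_mat_def B_mat_def)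

lemma y_carrier:
  "c_vec m \<eta> \<mu> @\<^sub>v d_vec n \<eta> \<nu> \<in> carrier_vec ((m - 1) + (n - 1))"
  by (intro append_carrier_vec) (auto simp: c_vec_def d_vec_def)

lemma X_diff_bound:
  fixes \<mu> \<mu>' \<nu> \<nu>' :: "nat \<Rightarrow> real"
  assumes t: "t \<ge> 0"
    and d\<mu>: "\<And>a. a \<in> {1..m} \<Longrightarrow> \<bar>\<mu> a - \<mu>' a\<bar> \<le> t"
    and d\<nu>: "\<And>b. b \<in> {1..n} \<Longrightarrow> \<bar>\<nu> b - \<nu>' b\<bar> \<le> t"
  shows "mn (stack_mat (A_mat m n d \<phi> \<nu>) (B_mat m n d \<phi> \<mu>) - stack_mat (A_mat m n d \<phi> \<nu>') (B_mat m n d \<phi> \<mu>'))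
     \<le> real ((m - 1) + (n - 1)) * real d * (real (m + n) * (t * (2 * Fphi m n d \<phi>)))"
proof (rule mn_entry_bound)
  show "stack_mat (A_mat m n d \<phi> \<nu>) (B_mat m n d \<phi> \<mu>) - stack_mat (A_mat m n d \<phi> \<nu>') (B_mat m n d \<phi> \<mu>')
    \<in> carrier_mat ((m - 1) + (n - 1)) d" using stack_carrier by (rule minus_carrier_mat)
  fix i j assume i: "i < (m - 1) + (n - 1)" and j: "j < d"
  let ?F = "Fphi m n d \<phi>"
  have F0: "?F \<ge> 0" unfolding Fphi_def by (intro sum_nonneg) auto
  show "\<bar>(stack_mat (A_mat m n d \<phi> \<nu>) (B_mat m n d \<phi> \<mu>) - stack_mat (A_mat m n d \<phi> \<nu>') (B_mat m n d \<phi> \<mu>')) $$ (i, j)\<bar>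
     \<le> real (m + n) * (t * (2 * ?F))"
  proof (cases "i < m - 1")
    case True
    let ?D = "\<lambda>b. \<phi> (i + 2) b $ j - \<phi> 1 b $ j"
    have e: "(stack_mat (A_mat m n d \<phi> \<nu>) (B_mat m n d \<phi> \<mu>) - stack_mat (A_mat m n d \<phi> \<nu>') (B_mat m n d \<phi> \<mu>')) $$ (i, j)
      = (\<Sum>b\<in>{1..n}. \<nu> b * ?D b) - (\<Sum>b\<in>{1..n}. \<nu>' b * ?D b)"
      using i j True stack_carrier[of m n d \<phi> \<nu>' \<mu>'] by (simp add: stack_mat_def A_mat_def B_mat_def)
    have "\<bar>(\<Sum>b\<in>{1..n}. \<nu> b * ?D b) - (\<Sum>b\<in>{1..n}. \<nu>' b * ?D b)\<bar> \<le> real (card {1..n}) * (t * (2 * ?F))"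
    proof (rule sum_dev_bound[OF d\<nu> _ t])
      fix b assume b: "b \<in> {1..n}"
      have "\<bar>?D b\<bar> \<le> \<bar>\<phi> (i + 2) b $ j\<bar> + \<bar>\<phi> 1 b $ j\<bar>" by linarith
      also have "\<dots> \<le> ?F + ?F" using True b j by (intro add_mono Fphi_bound) auto
      finally show "\<bar>?D b\<bar> \<le> 2 * ?F" by simp
    qed
    also have "\<dots> \<le> real (m + n) * (t * (2 * ?F))" using t F0 by (intro mult_right_mono) auto
    finally show ?thesis unfolding e .
  next
    case False
    let ?D = "\<lambda>a. \<phi> a (i - (m - 1) + 2) $ j - \<phi> a 1 $ j"
    have e: "(stack_mat (A_mat m n d \<phi> \<nu>) (B_mat m n d \<phi> \<mu>) - stack_mat (A_mat m n d \<phi> \<nu>') (B_mat m n d \<phi> \<mu>')) $$ (i, j)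
      = (\<Sum>a\<in>{1..m}. \<mu> a * ?D a) - (\<Sum>a\<in>{1..m}. \<mu>' a * ?D a)"
      using i j False stack_carrier[of m n d \<phi> \<nu>' \<mu>'] by (simp add: stack_mat_def A_mat_def B_mat_def)
    have "\<bar>(\<Sum>a\<in>{1..m}. \<mu> a * ?D a) - (\<Sum>a\<in>{1..m}. \<mu>' a * ?D a)\<bar> \<le> real (card {1..m}) * (t * (2 * ?F))"
    proof (rule sum_dev_bound[OF d\<mu> _ t])
      fix a assume a: "a \<in> {1..m}"
      have "\<bar>?D a\<bar> \<le> \<bar>\<phi> a (i - (m - 1) + 2) $ j\<bar> + \<bar>\<phi> a 1 $ j\<bar>" by linarith
      also have "\<dots> \<le> ?F + ?F" using False i a j by (intro add_mono Fphi_bound) auto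
      finally show "\<bar>?D a\<bar> \<le> 2 * ?F" by simp
    qed
    also have "\<dots> \<le> real (m + n) * (t * (2 * ?F))" using t F0 by (intro mult_right_mono) auto
    finally show ?thesis unfolding e .
  qed
qed

lemma ln_diff_bound:
  fixes x x' q :: real
  assumes "q > 0" "x \<ge> q" "x' \<ge> q"
  shows "\<bar>ln x - ln x'\<bar> \<le> \<bar>x - x'\<bar> / q"
proof -
  have x: "x > 0" and x': "x' > 0" using assms by auto
  have 1: "ln x - ln x' \<le> \<bar>x - x'\<bar> / q"
  proof -
    have "ln x - ln x' = ln (x / x')" using x x' by (simp add: ln_div)
    also have "\<dots> \<le> x / x' - 1" using x x' by (intro ln_le_minus_one) auto
    also have "\<dots> = (x - x') / x'" using x' by (simp add: field_simps)
    also have "\<dots> \<le> \<bar>x - x'\<bar> / x'" using x' by (intro divide_right_mono) auto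
    also have "\<dots> \<le> \<bar>x - x'\<bar> / q" using assms by (intro divide_left_mono) auto
    finally show ?thesis .
  qed
  have 2: "ln x' - ln x \<le> \<bar>x - x'\<bar> / q"
  proof -
    have "ln x' - ln x = ln (x' / x)" using x x' by (simp add: ln_div)
    also have "\<dots> \<le> x' / x - 1" using x x' by (intro ln_le_minus_one) auto
    also have "\<dots> = (x' - x) / x" using x by (simp add: field_simps)
    also have "\<dots> \<le> \<bar>x - x'\<bar> / x" using x by (intro divide_right_mono) auto
    also have "\<dots> \<le> \<bar>x - x'\<bar> / q" using assms by (intro divide_left_mono) auto
    finally show ?thesis .
  qed
  from 1 2 show ?thesis by linarith
qed

lemma log_ratio_bound:
  fixes x1 x2 y1 y2 p0 t :: real
  assumes p0: "p0 > 0" and t: "t \<le> p0 / 2"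
    and "y1 \<ge> p0" "y2 \<ge> p0" "\<bar>x1 - y1\<bar> \<le> t" "\<bar>x2 - y2\<bar> \<le> t"
  shows "\<bar>ln (x1 / x2) - ln (y1 / y2)\<bar> \<le> 4 * t / p0"
proof -
  have x1: "x1 \<ge> p0 / 2" and x2: "x2 \<ge> p0 / 2" using assms by linarith+
  have q: "p0 / 2 > 0" using p0 by simp
  have "ln (x1 / x2) - ln (y1 / y2) = (ln x1 - ln y1) - (ln x2 - ln y2)"
    using x1 x2 assms q by (simp add: ln_div)
  also have "\<bar>\<dots>\<bar> \<le> \<bar>ln x1 - ln y1\<bar> + \<bar>ln x2 - ln y2\<bar>" by linarith
  also have "\<dots> \<le> \<bar>x1 - y1\<bar> / (p0/2) + \<bar>x2 - y2\<bar> / (p0/2)"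
    using assms x1 x2 q by (intro add_mono ln_diff_bound) auto
  also have "\<dots> \<le> t / (p0/2) + t / (p0/2)"
    using assms q by (intro add_mono divide_right_mono) auto
  also have "\<dots> = 4 * t / p0" by (simp add: field_simps)
  finally show ?thesis .
qed

lemma y_diff_bound:
  fixes \<mu> \<mu>' \<nu> \<nu>' :: "nat \<Rightarrow> real"
  assumes p0: "p0 > 0" and \<eta>: "\<eta> > 0" and t: "t \<le> p0 / 2"
    and m: "m \<ge> 1" and n: "n \<ge> 1"
    and p\<mu>: "\<And>a. a \<in> {1..m} \<Longrightarrow> \<mu>' a \<ge> p0" and p\<nu>: "\<And>b. b \<in> {1..n} \<Longrightarrow> \<nu>' b \<ge> p0"
    and d\<mu>: "\<And>a. a \<in> {1..m} \<Longrightarrow> \<bar>\<mu> a - \<mu>' a\<bar> \<le> t"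
    and d\<nu>: "\<And>b. b \<in> {1..n} \<Longrightarrow> \<bar>\<nu> b - \<nu>' b\<bar> \<le> t"
  shows "n1 ((c_vec m \<eta> \<mu> @\<^sub>v d_vec n \<eta> \<nu>) - (c_vec m \<eta> \<mu>' @\<^sub>v d_vec n \<eta> \<nu>'))
     \<le> real ((m - 1) + (n - 1)) * (4 * t / p0 / \<eta>)"
proof (rule n1_entry_bound)
  show "(c_vec m \<eta> \<mu> @\<^sub>v d_vec n \<eta> \<nu>) - (c_vec m \<eta> \<mu>' @\<^sub>v d_vec n \<eta> \<nu>') \<in> carrier_vec ((m - 1) + (n - 1))"
    using y_carrier y_carrier by (rule minus_carrier_vec)
  fix i assume i: "i < (m - 1) + (n - 1)"
  show "\<bar>((c_vec m \<eta> \<mu> @\<^sub>v d_vec n \<eta> \<nu>) - (c_vec m \<eta> \<mu>' @\<^sub>v d_vec n \<eta> \<nu>')) $ i\<bar> \<le> 4 * t / p0 / \<eta>"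
  proof (cases "i < m - 1")
    case True
    have e: "((c_vec m \<eta> \<mu> @\<^sub>v d_vec n \<eta> \<nu>) - (c_vec m \<eta> \<mu>' @\<^sub>v d_vec n \<eta> \<nu>')) $ i
      = (ln (\<mu> (i + 2) / \<mu> 1) - ln (\<mu>' (i + 2) / \<mu>' 1)) / \<eta>"
      using i True y_carrier[of m \<eta> \<mu>' n \<nu>'] by (simp add: c_vec_def d_vec_def diff_divide_distrib)
    have "\<bar>ln (\<mu> (i + 2) / \<mu> 1) - ln (\<mu>' (i + 2) / \<mu>' 1)\<bar> \<le> 4 * t / p0"
      using True m by (intro log_ratio_bound[OF p0 t] p\<mu> d\<mu>) auto
    note L = this
    show ?thesis unfolding e using divide_right_mono[OF L less_imp_le[OF \<eta>]] \<eta> by (simp add: abs_divide)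
  next
    case False
    let ?k = "i - (m - 1)"
    have e: "((c_vec m \<eta> \<mu> @\<^sub>v d_vec n \<eta> \<nu>) - (c_vec m \<eta> \<mu>' @\<^sub>v d_vec n \<eta> \<nu>')) $ i
      = - (ln (\<nu> (?k + 2) / \<nu> 1) - ln (\<nu>' (?k + 2) / \<nu>' 1)) / \<eta>"
      using i False y_carrier[of m \<eta> \<mu>' n \<nu>'] by (simp add: c_vec_def d_vec_def diff_divide_distrib)
    have "\<bar>ln (\<nu> (?k + 2) / \<nu> 1) - ln (\<nu>' (?k + 2) / \<nu>' 1)\<bar> \<le> 4 * t / p0"
      using False i n by (intro log_ratio_bound[OF p0 t] p\<nu> d\<nu>) auto
    note L = this
    show ?thesis unfolding e using divide_right_mono[OF L less_imp_le[OF \<eta>]] \<eta> by (simp add: abs_divide abs_minus_commute)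
  qed
qed

lemma map_eq_bernoulli:
  fixes \<mu> :: "'a pmf"
  shows "map_pmf (\<lambda>x. x = a) \<mu> = bernoulli_pmf (pmf \<mu> a)"
proof (rule pmf_eqI)
  fix b :: bool
  have 0: "0 \<le> pmf \<mu> a" "pmf \<mu> a \<le> 1" by (auto simp: pmf_le_1)
  show "pmf (map_pmf (\<lambda>x. x = a) \<mu>) b = pmf (bernoulli_pmf (pmf \<mu> a)) b"
  proof (cases b)
    case True
    have "(\<lambda>x. x = a) -` {True} = {a}" by auto
    then show ?thesis using True 0 by (simp add: pmf_map measure_pmf_single)
  next
    case False
    have "(\<lambda>x. x = a) -` {False} = UNIV - {a}" by auto
    have "measure_pmf.prob \<mu> (UNIV - {a}) = 1 - pmf \<mu> a"
      using measure_pmf.prob_compl[of "{a}" \<mu>] by (simp add: measure_pmf_single)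
    then show ?thesis using False 0 \<open>(\<lambda>x. x = a) -` {False} = UNIV - {a}\<close>
      by (simp add: pmf_map del: vimage_eq)
  qed
qed

lemma emp_fst_binomial:
  "map_pmf (\<lambda>s. card {k\<in>{..<N}. fst (s k) = a}) (Pi_pmf {..<N} dflt (\<lambda>_. pair_pmf \<mu> \<nu>))
    = binomial_pmf N (pmf \<mu> a)"
proof -
  let ?g = "\<lambda>x::'a\<times>'b. fst x = a"
  have "map_pmf ?g (pair_pmf \<mu> \<nu>) = map_pmf (\<lambda>x. x = a) (map_pmf fst (pair_pmf \<mu> \<nu>))"
    by (simp add: pmf.map_comp o_def)
  also have "\<dots> = bernoulli_pmf (pmf \<mu> a)" by (simp add: map_fst_pair_pmf map_eq_bernoulli)
  finally have e: "map_pmf ?g (pair_pmf \<mu> \<nu>) = bernoulli_pmf (pmf \<mu> a)" .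
  have "map_pmf (\<lambda>s. card {k\<in>{..<N}. fst (s k) = a}) (Pi_pmf {..<N} dflt (\<lambda>_. pair_pmf \<mu> \<nu>))
     = map_pmf (\<lambda>f. card {k\<in>{..<N}. f k}) (map_pmf (\<lambda>h. ?g \<circ> h) (Pi_pmf {..<N} dflt (\<lambda>_. pair_pmf \<mu> \<nu>)))"
    by (simp add: pmf.map_comp o_def)
  also have "map_pmf (\<lambda>h. ?g \<circ> h) (Pi_pmf {..<N} dflt (\<lambda>_. pair_pmf \<mu> \<nu>))
     = Pi_pmf {..<N} (?g dflt) (\<lambda>_. map_pmf ?g (pair_pmf \<mu> \<nu>))"
    by (rule Pi_pmf_map[symmetric]) auto
  also have "map_pmf (\<lambda>f. card {k\<in>{..<N}. f k}) (Pi_pmf {..<N} (?g dflt) (\<lambda>_. map_pmf ?g (pair_pmf \<mu> \<nu>)))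
     = binomial_pmf N (pmf \<mu> a)"
    unfolding e by (rule binomial_pmf_altdef'[symmetric]) (auto simp: pmf_le_1)
  finally show ?thesis .
qed

lemma emp_snd_binomial:
  "map_pmf (\<lambda>s. card {k\<in>{..<N}. snd (s k) = b}) (Pi_pmf {..<N} dflt (\<lambda>_. pair_pmf \<mu> \<nu>))
    = binomial_pmf N (pmf \<nu> b)"
proof -
  let ?g = "\<lambda>x::'a\<times>'b. snd x = b"
  have "map_pmf ?g (pair_pmf \<mu> \<nu>) = map_pmf (\<lambda>x. x = b) (map_pmf snd (pair_pmf \<mu> \<nu>))"
    by (simp add: pmf.map_comp o_def)
  also have "\<dots> = bernoulli_pmf (pmf \<nu> b)" by (simp add: map_snd_pair_pmf map_eq_bernoulli)
  finally have e: "map_pmf ?g (pair_pmf \<mu> \<nu>) = bernoulli_pmf (pmf \<nu> b)" .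
  have "map_pmf (\<lambda>s. card {k\<in>{..<N}. snd (s k) = b}) (Pi_pmf {..<N} dflt (\<lambda>_. pair_pmf \<mu> \<nu>))
     = map_pmf (\<lambda>f. card {k\<in>{..<N}. f k}) (map_pmf (\<lambda>h. ?g \<circ> h) (Pi_pmf {..<N} dflt (\<lambda>_. pair_pmf \<mu> \<nu>)))"
    by (simp add: pmf.map_comp o_def)
  also have "map_pmf (\<lambda>h. ?g \<circ> h) (Pi_pmf {..<N} dflt (\<lambda>_. pair_pmf \<mu> \<nu>))
     = Pi_pmf {..<N} (?g dflt) (\<lambda>_. map_pmf ?g (pair_pmf \<mu> \<nu>))"
    by (rule Pi_pmf_map[symmetric]) auto
  also have "map_pmf (\<lambda>f. card {k\<in>{..<N}. f k}) (Pi_pmf {..<N} (?g dflt) (\<lambda>_. map_pmf ?g (pair_pmf \<mu> \<nu>)))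
     = binomial_pmf N (pmf \<nu> b)"
    unfolding e by (rule binomial_pmf_altdef'[symmetric]) (auto simp: pmf_le_1)
  finally show ?thesis .
qed

lemma emp_fst_tail:
  assumes "N > 0" "t \<ge> 0"
  shows "measure_pmf.prob (Pi_pmf {..<N} dflt (\<lambda>_. pair_pmf \<mu> \<nu>))
           {s. \<bar>emp_fst N s a - pmf \<mu> a\<bar> \<ge> t} \<le> 2 * exp (- 2 * real N * t\<^sup>2)"
proof -
  interpret binomial_distribution N "pmf \<mu> a" by unfold_locales (auto simp: pmf_le_1)
  have "measure_pmf.prob (Pi_pmf {..<N} dflt (\<lambda>_. pair_pmf \<mu> \<nu>))
           {s. \<bar>emp_fst N s a - pmf \<mu> a\<bar> \<ge> t}
      = measure_pmf.prob (map_pmf (\<lambda>s. card {k\<in>{..<N}. fst (s k) = a}) (Pi_pmf {..<N} dflt (\<lambda>_. pair_pmf \<mu> \<nu>)))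
           {x. \<bar>real x / N - pmf \<mu> a\<bar> \<ge> t}"
    by (simp add: emp_fst_def vimage_def)
  also have "\<dots> \<le> 2 * exp (- 2 * real N * t\<^sup>2)"
    unfolding emp_fst_binomial using prob_abs_ge'[OF assms(1) assms(2)] by simp
  finally show ?thesis .
qed

lemma emp_snd_tail:
  assumes "N > 0" "t \<ge> 0"
  shows "measure_pmf.prob (Pi_pmf {..<N} dflt (\<lambda>_. pair_pmf \<mu> \<nu>))
           {s. \<bar>emp_snd N s b - pmf \<nu> b\<bar> \<ge> t} \<le> 2 * exp (- 2 * real N * t\<^sup>2)"
proof -
  interpret binomial_distribution N "pmf \<nu> b" by unfold_locales (auto simp: pmf_le_1)
  have "measure_pmf.prob (Pi_pmf {..<N} dflt (\<lambda>_. pair_pmf \<mu> \<nu>))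
           {s. \<bar>emp_snd N s b - pmf \<nu> b\<bar> \<ge> t}
      = measure_pmf.prob (map_pmf (\<lambda>s. card {k\<in>{..<N}. snd (s k) = b}) (Pi_pmf {..<N} dflt (\<lambda>_. pair_pmf \<mu> \<nu>)))
           {x. \<bar>real x / N - pmf \<nu> b\<bar> \<ge> t}"
    by (simp add: emp_snd_def vimage_def)
  also have "\<dots> \<le> 2 * exp (- 2 * real N * t\<^sup>2)"
    unfolding emp_snd_binomial using prob_abs_ge'[OF assms(1) assms(2)] by simp
  finally show ?thesis .
qed

theorem mainTheorem6:
  fixes m n d :: nat and \<eta> M \<sigma>b :: real
    and \<phi> :: "nat \<Rightarrow> nat \<Rightarrow> real vec" and \<theta>s :: "real vec"
    and \<mu>s :: "nat pmf" and \<nu>s :: "nat pmf"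
  assumes "m \<ge> 2" and "n \<ge> 2" and "\<eta> > 0"
    and "\<And>a b. \<phi> a b \<in> carrier_vec d"
    and "\<theta>s \<in> carrier_vec d" and "\<theta>s \<bullet> \<theta>s \<le> M"
    and "set_pmf \<mu>s \<subseteq> {1..m}" and "set_pmf \<nu>s \<subseteq> {1..n}"
    and "is_QRE m n \<eta> (\<lambda>a b. \<phi> a b \<bullet> \<theta>s) (pmf \<mu>s) (pmf \<nu>s)"
    and "full_row_rank (stack_mat (A_mat m n d \<phi> (pmf \<nu>s)) (B_mat m n d \<phi> (pmf \<mu>s)))"
    and "\<sigma>b > 0"
    and "sigma_min (stack_mat (A_mat m n d \<phi> (pmf \<nu>s)) (B_mat m n d \<phi> (pmf \<mu>s))) \<ge> \<sigma>b"
  shows "\<forall>\<delta>\<in>{0<..<1}. \<exists>N0 C. \<forall>N\<ge>N0.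
     measure_pmf.prob (Pi_pmf {..<N} undefined (\<lambda>_. pair_pmf \<mu>s \<nu>s))
       {s. vnorm (pinv (stack_mat (A_mat m n d \<phi> (emp_snd N s)) (B_mat m n d \<phi> (emp_fst N s)))
                    *\<^sub>v (c_vec m \<eta> (emp_fst N s) @\<^sub>v d_vec n \<eta> (emp_snd N s))
                  - pinv (stack_mat (A_mat m n d \<phi> (pmf \<nu>s)) (B_mat m n d \<phi> (pmf \<mu>s)))
                    *\<^sub>v (c_vec m \<eta> (pmf \<mu>s) @\<^sub>v d_vec n \<eta> (pmf \<nu>s)))
           \<le> C * (real m ^ 2 + real n ^ 2) / sqrt (real N)}
     \<ge> 1 - \<delta>"
proof (intro ballI)
  fix \<delta> :: real assume \<delta>: "\<delta> \<in> {0<..<1}"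
  have m: "m \<ge> 2" and n: "n \<ge> 2" and \<eta>: "\<eta> > 0" using assms by auto
  note QRE = assms(9)[unfolded is_QRE_def]
  have p\<mu>: "pmf \<mu>s a > 0" if a: "a \<in> {1..m}" for a
  proof -
    have "(\<Sum>a'\<in>{1..m}. exp (\<eta> * (\<Sum>b\<in>{1..n}. (\<phi> a' b \<bullet> \<theta>s) * pmf \<nu>s b))) > 0"
      using m by (intro sum_pos) auto
    moreover have "pmf \<mu>s a = exp (\<eta> * (\<Sum>b\<in>{1..n}. (\<phi> a b \<bullet> \<theta>s) * pmf \<nu>s b)) /
        (\<Sum>a'\<in>{1..m}. exp (\<eta> * (\<Sum>b\<in>{1..n}. (\<phi> a' b \<bullet> \<theta>s) * pmf \<nu>s b)))"
      using QRE a by blast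
    ultimately show ?thesis by simp
  qed
  have p\<nu>: "pmf \<nu>s b > 0" if b: "b \<in> {1..n}" for b
  proof -
    have "(\<Sum>b'\<in>{1..n}. exp (- \<eta> * (\<Sum>a\<in>{1..m}. (\<phi> a b' \<bullet> \<theta>s) * pmf \<mu>s a))) > 0"
      using n by (intro sum_pos) auto
    moreover have "pmf \<nu>s b = exp (- \<eta> * (\<Sum>a\<in>{1..m}. (\<phi> a b \<bullet> \<theta>s) * pmf \<mu>s a)) /
        (\<Sum>b'\<in>{1..n}. exp (- \<eta> * (\<Sum>a\<in>{1..m}. (\<phi> a b' \<bullet> \<theta>s) * pmf \<mu>s a)))"
      using QRE b by blast
    ultimately show ?thesis by simp
  qed
  define S0 where "S0 = pmf \<mu>s ` {1..m} \<union> pmf \<nu>s ` {1..n}"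
  define p0 where "p0 = Min S0"
  have S0f: "finite S0" "S0 \<noteq> {}" unfolding S0_def using m by auto
  have p0pos: "p0 > 0" unfolding p0_def using S0f p\<mu> p\<nu> by (subst Min_gr_iff) (auto simp: S0_def)
  have p0\<mu>: "pmf \<mu>s a \<ge> p0" if "a \<in> {1..m}" for a
    unfolding p0_def using S0f that by (intro Min_le) (auto simp: S0_def)
  have p0\<nu>: "pmf \<nu>s b \<ge> p0" if "b \<in> {1..n}" for b
    unfolding p0_def using S0f that by (intro Min_le) (auto simp: S0_def)
  define r where "r = (m - 1) + (n - 1)"
  define X0 where "X0 = stack_mat (A_mat m n d \<phi> (pmf \<nu>s)) (B_mat m n d \<phi> (pmf \<mu>s))"
  define y0 where "y0 = c_vec m \<eta> (pmf \<mu>s) @\<^sub>v d_vec n \<eta> (pmf \<nu>s)"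
  have X0C: "X0 \<in> carrier_mat r d" unfolding X0_def r_def by (rule stack_carrier)
  have y0C: "y0 \<in> carrier_vec r" unfolding y0_def r_def by (rule y_carrier)
  have rk: "vec_space.rank r X0 = r"
    using assms(10) X0C unfolding full_row_rank_def X0_def[symmetric] by auto
  obtain e0 L where e0: "e0 > 0" and LL: "\<And>X y. X \<in> carrier_mat r d \<Longrightarrow> y \<in> carrier_vec r \<Longrightarrow>
      mn (X - X0) \<le> e0 \<Longrightarrow> n1 (pinv X *\<^sub>v y - pinv X0 *\<^sub>v y0) \<le> L * (mn (X - X0) + n1 (y - y0))"
    using perturb[OF X0C rk y0C] by blast
  define CX where "CX = real r * real d * (real (m + n) * (2 * Fphi m n d \<phi>))"
  define CY where "CY = real r * (4 / p0 / \<eta>)"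
  have F0: "Fphi m n d \<phi> \<ge> 0" unfolding Fphi_def by (intro sum_nonneg) auto
  have CX0: "CX \<ge> 0" unfolding CX_def using F0 by simp
  have CY0: "CY \<ge> 0" unfolding CY_def using p0pos \<eta> by simp
  define t1 where "t1 = min (p0 / 2) (e0 / (CX + 1))"
  have t1pos: "t1 > 0" unfolding t1_def using p0pos e0 CX0 by simp
  have CXt1: "CX * t1 \<le> e0"
  proof -
    have "CX * t1 \<le> CX * (e0 / (CX + 1))" unfolding t1_def using CX0 by (intro mult_left_mono) auto
    also have "\<dots> \<le> e0" using CX0 e0 by (simp add: field_simps)
    finally show ?thesis .
  qed
  define Q where "Q = 2 * real (m + n) / \<delta>"
  have Q1: "Q > 1" unfolding Q_def using \<delta> m by (simp add: field_simps)
  define K where "K = sqrt (ln Q)"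
  have lnQ: "ln Q > 0" using Q1 by simp
  have Kpos: "K > 0" unfolding K_def using lnQ by simp
  have K2: "K\<^sup>2 = ln Q" unfolding K_def using lnQ by simp
  define N0 where "N0 = nat \<lceil>(K / t1)\<^sup>2\<rceil> + 1"
  define C where "C = max L 0 * (CX + CY) * K"
  have C0: "C \<ge> 0" unfolding C_def using CX0 CY0 Kpos by simp
  show "\<exists>N0 C. \<forall>N\<ge>N0.
     measure_pmf.prob (Pi_pmf {..<N} undefined (\<lambda>_. pair_pmf \<mu>s \<nu>s))
       {s. vnorm (pinv (stack_mat (A_mat m n d \<phi> (emp_snd N s)) (B_mat m n d \<phi> (emp_fst N s)))
                    *\<^sub>v (c_vec m \<eta> (emp_fst N s) @\<^sub>v d_vec n \<eta> (emp_snd N s))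
                  - pinv (stack_mat (A_mat m n d \<phi> (pmf \<nu>s)) (B_mat m n d \<phi> (pmf \<mu>s)))
                    *\<^sub>v (c_vec m \<eta> (pmf \<mu>s) @\<^sub>v d_vec n \<eta> (pmf \<nu>s)))
           \<le> C * (real m ^ 2 + real n ^ 2) / sqrt (real N)}
     \<ge> 1 - \<delta>"
  proof (intro exI[of _ N0] exI[of _ C] allI impI)
    fix N assume N: "N \<ge> N0"
    have Npos: "N > 0" using N unfolding N0_def by simp
    have "real N \<ge> (K / t1)\<^sup>2" using N unfolding N0_def by linarith
    then have sN: "sqrt (real N) \<ge> K / t1" by (simp add: real_le_rsqrt)
    have sNpos: "sqrt (real N) > 0" using Npos by simp
    define t where "t = K / sqrt (real N)"
    have tpos: "t > 0" unfolding t_def using Kpos sNpos by simp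
    have tt1: "t \<le> t1"
    proof -
      have "K \<le> t1 * sqrt (real N)" using sN t1pos by (simp add: field_simps)
      then show ?thesis unfolding t_def using sNpos by (simp add: field_simps)
    qed
    have Nt2: "real N * t\<^sup>2 = K\<^sup>2" unfolding t_def using Npos by (simp add: power_divide)
    let ?M = "Pi_pmf {..<N} undefined (\<lambda>_. pair_pmf \<mu>s \<nu>s)"
    define G where "G = {s. (\<forall>a\<in>{1..m}. \<bar>emp_fst N s a - pmf \<mu>s a\<bar> < t) \<and>
                          (\<forall>b\<in>{1..n}. \<bar>emp_snd N s b - pmf \<nu>s b\<bar> < t)}"
    define T where "T = {s. vnorm (pinv (stack_mat (A_mat m n d \<phi> (emp_snd N s)) (B_mat m n d \<phi> (emp_fst N s)))
                    *\<^sub>v (c_vec m \<eta> (emp_fst N s) @\<^sub>v d_vec n \<eta> (emp_snd N s))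
                  - pinv (stack_mat (A_mat m n d \<phi> (pmf \<nu>s)) (B_mat m n d \<phi> (pmf \<mu>s)))
                    *\<^sub>v (c_vec m \<eta> (pmf \<mu>s) @\<^sub>v d_vec n \<eta> (pmf \<nu>s)))
           \<le> C * (real m ^ 2 + real n ^ 2) / sqrt (real N)}"
    have GT: "G \<subseteq> T"
    proof
      fix s assume "s \<in> G"
      then have d\<mu>: "\<And>a. a \<in> {1..m} \<Longrightarrow> \<bar>emp_fst N s a - pmf \<mu>s a\<bar> \<le> t"
        and d\<nu>: "\<And>b. b \<in> {1..n} \<Longrightarrow> \<bar>emp_snd N s b - pmf \<nu>s b\<bar> \<le> t"
        unfolding G_def by (auto simp: less_imp_le)
      define X where "X = stack_mat (A_mat m n d \<phi> (emp_snd N s)) (B_mat m n d \<phi> (emp_fst N s))"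
      define y where "y = c_vec m \<eta> (emp_fst N s) @\<^sub>v d_vec n \<eta> (emp_snd N s)"
      have XC: "X \<in> carrier_mat r d" unfolding X_def r_def by (rule stack_carrier)
      have yC: "y \<in> carrier_vec r" unfolding y_def r_def by (rule y_carrier)
      have tp: "t \<le> p0 / 2" using tt1 unfolding t1_def by simp
      have m1: "m \<ge> 1" and n1': "n \<ge> 1" using m n by auto
      have eX0: "mn (X - X0) \<le> real r * real d * (real (m + n) * (t * (2 * Fphi m n d \<phi>)))"
        unfolding X_def X0_def r_def by (rule X_diff_bound[OF less_imp_le[OF tpos] d\<mu> d\<nu>])
      have "real r * real d * (real (m + n) * (t * (2 * Fphi m n d \<phi>))) = CX * t"
        unfolding CX_def by (simp add: algebra_simps)
      with eX0 have eX: "mn (X - X0) \<le> CX * t" by linarith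
      have eY0: "n1 (y - y0) \<le> real r * (4 * t / p0 / \<eta>)"
        unfolding y_def y0_def r_def by (rule y_diff_bound[OF p0pos \<eta> tp m1 n1' p0\<mu> p0\<nu> d\<mu> d\<nu>])
      have "real r * (4 * t / p0 / \<eta>) = CY * t"
        unfolding CY_def by (simp add: algebra_simps)
      with eY0 have eY: "n1 (y - y0) \<le> CY * t" by linarith
      have "CX * t \<le> CX * t1" using tt1 CX0 by (rule mult_left_mono)
      then have ee: "mn (X - X0) \<le> e0" using eX CXt1 by linarith
      have "vnorm (pinv X *\<^sub>v y - pinv X0 *\<^sub>v y0) \<le> n1 (pinv X *\<^sub>v y - pinv X0 *\<^sub>v y0)"
        by (rule vnorm_le_n1)
      also have "\<dots> \<le> L * (mn (X - X0) + n1 (y - y0))" by (rule LL[OF XC yC ee])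
      also have "\<dots> \<le> max L 0 * (mn (X - X0) + n1 (y - y0))"
        using mn_nonneg[of "X - X0"] n1_nonneg[of "y - y0"] by (intro mult_right_mono) auto
      also have "\<dots> \<le> max L 0 * (CX * t + CY * t)" using eX eY by (intro mult_left_mono) auto
      also have "\<dots> = C / sqrt (real N)" unfolding C_def t_def by (simp add: algebra_simps add_divide_distrib)
      also have "\<dots> \<le> C * (real m ^ 2 + real n ^ 2) / sqrt (real N)"
      proof -
        have "1 \<le> real m ^ 2 + real n ^ 2" using m by (simp add: one_le_power add_increasing2)
        then have "C \<le> C * (real m ^ 2 + real n ^ 2)" using C0 by (simp add: mult_le_cancel_left1)
        then show ?thesis using sNpos by (simp add: divide_right_mono)
      qed
      finally show "s \<in> T" unfolding T_def X_def y_def X0_def y0_def by simp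
    qed
    define E where "E = (\<lambda>a. {s. t \<le> \<bar>emp_fst N s a - pmf \<mu>s a\<bar>})"
    define F where "F = (\<lambda>b. {s. t \<le> \<bar>emp_snd N s b - pmf \<nu>s b\<bar>})"
    have compl: "UNIV - G \<subseteq> (\<Union>a\<in>{1..m}. E a) \<union> (\<Union>b\<in>{1..n}. F b)"
      unfolding G_def E_def F_def by (auto simp: not_less)
    have bnd: "2 * exp (- 2 * real N * t\<^sup>2) \<le> \<delta> / real (m + n)"
    proof -
      have "- 2 * real N * t\<^sup>2 = - 2 * ln Q" using Nt2 K2 by simp
      then have "exp (- 2 * real N * t\<^sup>2) = exp (- 2 * ln Q)" by simp
      also have "\<dots> \<le> exp (- ln Q)" using lnQ by simp
      also have "\<dots> = 1 / Q" using Q1 by (simp add: exp_minus inverse_eq_divide)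
      finally show ?thesis unfolding Q_def using m by (simp add: field_simps)
    qed
    have "measure_pmf.prob ?M (UNIV - G) \<le> measure_pmf.prob ?M ((\<Union>a\<in>{1..m}. E a) \<union> (\<Union>b\<in>{1..n}. F b))"
      using compl by (intro measure_pmf.finite_measure_mono) auto
    also have "\<dots> \<le> measure_pmf.prob ?M (\<Union>a\<in>{1..m}. E a) + measure_pmf.prob ?M (\<Union>b\<in>{1..n}. F b)"
      by (rule measure_Un_le) auto
    also have "\<dots> \<le> (\<Sum>a\<in>{1..m}. measure_pmf.prob ?M (E a)) + (\<Sum>b\<in>{1..n}. measure_pmf.prob ?M (F b))"
      by (intro add_mono measure_pmf.finite_measure_subadditive_finite) auto
    also have "\<dots> \<le> (\<Sum>a\<in>{1..m}. \<delta> / real (m + n)) + (\<Sum>b\<in>{1..n}. \<delta> / real (m + n))"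
    proof (intro add_mono sum_mono)
      fix a show "measure_pmf.prob ?M (E a) \<le> \<delta> / real (m + n)"
        unfolding E_def using emp_fst_tail[OF Npos less_imp_le[OF tpos]] bnd by (rule order_trans)
    next
      fix b show "measure_pmf.prob ?M (F b) \<le> \<delta> / real (m + n)"
        unfolding F_def using emp_snd_tail[OF Npos less_imp_le[OF tpos]] bnd by (rule order_trans)
    qed
    also have "\<dots> = (real m + real n) * (\<delta> / (real m + real n))" by (simp add: algebra_simps add_divide_distrib)
    also have "\<dots> = \<delta>" using m by simp
    finally have cb: "measure_pmf.prob ?M (UNIV - G) \<le> \<delta>" .
    have "measure_pmf.prob ?M G = 1 - measure_pmf.prob ?M (UNIV - G)"
      using measure_pmf.prob_compl[of "UNIV - G" ?M] by (simp add: Diff_Diff_Int)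
    then have "measure_pmf.prob ?M G \<ge> 1 - \<delta>" using cb by simp
    also have "measure_pmf.prob ?M G \<le> measure_pmf.prob ?M T"
      using GT by (intro measure_pmf.finite_measure_mono) auto
    finally show "measure_pmf.prob ?M T \<ge> 1 - \<delta>" unfolding T_def .
  qed
qed

end
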